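(* For $\pi\in S_n$ and $w\in I_n$ let $\mathrm{inv}_w(\pi)=\#\big(\mathrm{Inv}(\pi)\cap\mathrm{Pair}(w)\big)$. Then for all $\sigma,\pi\in S_n$ and $w\in I_n$, $$(-1)^{\mathrm{inv}_w(\sigma\pi)}=(-1)^{\mathrm{inv}_w(\pi)}\cdot(-1)^{\mathrm{inv}_{\pi w\pi^{-1}}(\sigma)}.$$ Consequently the formula $\rho(\pi)C_w=(-1)^{\mathrm{inv}_w(\pi)}C_{\pi w\pi^{-1}}$ ($\pi\in S_n$, $w\in I_n$) defines a representation of $S_n$ on $V_n$, and for each $s\in S$ it agrees with $\rho(s)C_w=\mathrm{sign}(s;w)C_{sws}$.
   Context: $I_n$ is the set of involutions (including the identity) of $S_n$; $V_n$ is the $\mathbb{Q}$-vector space with basis $\{C_w:w\in I_n\}$. $\mathrm{Inv}(\pi)=\{\{i,j\}: (j-i)(\pi(j)-\pi(i))<0\}$. For $w\in I_n$, $\mathrm{Pair}(w)$ is the set of 2-cycles of $w$, regarded as unordered 2-element subsets of $[n]$. $S=\{s_i=(i,i+1):1\le i\le n-1\}$; $\mathrm{sign}(s;w)=-1$ if $sws=w$ and $s\in\mathrm{Des}(w)$, and $1$ otherwise, where $s_i\in\mathrm{Des}(w)$ iff $w(i)>w(i+1)$. *)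

theory Defs
  imports "HOL-Combinatorics.Combinatorics"
begin

text \<open>Permutations of [n] = {1..n} are functions nat => nat permuting {1..n};
  the product sigma pi is composition sigma o pi (apply pi first).\<close>

definition Sym :: "nat \<Rightarrow> (nat \<Rightarrow> nat) set" where
  "Sym n = {p. p permutes {1..n}}"

definition Invol :: "nat \<Rightarrow> (nat \<Rightarrow> nat) set" where
  "Invol n = {w. w permutes {1..n} \<and> w \<circ> w = id}"

definition Inv :: "nat \<Rightarrow> (nat \<Rightarrow> nat) \<Rightarrow> nat set set" where
  "Inv n p = {{i, j} | i j. i \<in> {1..n} \<and> j \<in> {1..n} \<and>
                 (int j - int i) * (int (p j) - int (p i)) < 0}"

definition Pair :: "nat \<Rightarrow> (nat \<Rightarrow> nat) \<Rightarrow> nat set set" where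
  "Pair n w = {{i, w i} | i. i \<in> {1..n} \<and> w i \<noteq> i}"

definition inv_w :: "nat \<Rightarrow> (nat \<Rightarrow> nat) \<Rightarrow> (nat \<Rightarrow> nat) \<Rightarrow> nat" where
  "inv_w n w p = card (Inv n p \<inter> Pair n w)"

text \<open>V_n: Q-vector space with basis C_w (w in I_n), represented as
  coefficient functions supported on I_n.\<close>
definition V :: "nat \<Rightarrow> ((nat \<Rightarrow> nat) \<Rightarrow> rat) set" where
  "V n = {v. \<forall>u. u \<notin> Invol n \<longrightarrow> v u = 0}"

definition C :: "(nat \<Rightarrow> nat) \<Rightarrow> ((nat \<Rightarrow> nat) \<Rightarrow> rat)" where
  "C w = (\<lambda>u. if u = w then 1 else 0)"

text \<open>The linear map rho(pi): C_w |-> (-1)^(inv_w(pi)) C_(pi w pi^-1), extended linearly.\<close>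
definition rho :: "nat \<Rightarrow> (nat \<Rightarrow> nat) \<Rightarrow> ((nat \<Rightarrow> nat) \<Rightarrow> rat) \<Rightarrow> ((nat \<Rightarrow> nat) \<Rightarrow> rat)" where
  "rho n p v = (\<lambda>u. if u \<in> Invol n
       then (-1) ^ inv_w n (inv p \<circ> u \<circ> p) p * v (inv p \<circ> u \<circ> p) else 0)"

definition s :: "nat \<Rightarrow> nat \<Rightarrow> nat" where
  "s i = transpose i (i + 1)"

definition sgn_s :: "nat \<Rightarrow> (nat \<Rightarrow> nat) \<Rightarrow> rat" where
  "sgn_s i w = (if s i \<circ> w \<circ> s i = w \<and> w i > w (i + 1) then -1 else 1)"

end

theory Submission imports Defs begin

lemma Inv_mem:
  assumes "i \<in> {1..n}" "j \<in> {1..n}"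
  shows "({i,j} \<in> Inv n p) = ((int j - int i)*(int(p j) - int(p i)) < 0)"
proof
  assume "{i,j} \<in> Inv n p"
  then obtain a b where ab: "{i,j} = {a,b}" "(int b - int a) * (int (p b) - int (p a)) < 0"
    unfolding Inv_def by blast
  have e: "(int a - int b) * (int (p a) - int (p b)) = (int b - int a) * (int (p b) - int (p a))"
    by (simp add: algebra_simps)
  from ab(1) have "(i = a \<and> j = b) \<or> (i = b \<and> j = a)" by (auto simp: doubleton_eq_iff)
  then show "(int j - int i)*(int(p j) - int(p i)) < 0" using ab(2) e by auto
next
  assume "(int j - int i)*(int(p j) - int(p i)) < 0"
  then show "{i,j} \<in> Inv n p" using assms unfolding Inv_def by blast
qed

lemma Pair_eq: "Defs.Pair n w = (\<lambda>i. {i, w i}) ` {i\<in>{1..n}. w i \<noteq> i}"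
  unfolding Pair_def by auto

lemma Pair_finite: "finite (Defs.Pair n w)"
  unfolding Pair_eq by simp

lemma sign_prod:
  assumes "finite P"
  shows "(-1::'a::comm_ring_1)^card(S \<inter> P) = (\<Prod>x\<in>P. if x \<in> S then -1 else 1)"
proof -
  have "(\<Prod>x\<in>P. if x \<in> S then -1 else (1::'a)) = (\<Prod>x\<in>P \<inter> {x. x\<in>S}. -1) * (\<Prod>x\<in>P \<inter> - {x. x\<in>S}. 1)"
    by (rule prod.If_cases[OF assms])
  also have "\<dots> = (-1)^card(S \<inter> P)" by (simp add: Int_commute Collect_mem_eq)
  finally show ?thesis by simp
qed

lemma sign3:
  fixes a b c :: int
  assumes "a \<noteq> 0" "b \<noteq> 0" "c \<noteq> 0"
  shows "(if a*c<0 then -1 else 1::'a::comm_ring_1) = (if a*b<0 then -1 else 1)*(if b*c<0 then -1 else 1)"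
  using assms by (auto simp: mult_less_0_iff)

lemma inv_w_prod: "(-1::'a::comm_ring_1)^inv_w n w p = (\<Prod>P\<in>Defs.Pair n w. if P \<in> Inv n p then -1 else 1)"
  unfolding inv_w_def by (rule sign_prod[OF Pair_finite])

lemma Pair_conj:
  assumes hp: "p permutes {1..n}"
  shows "Defs.Pair n (p \<circ> w \<circ> inv p) = (`) p ` Defs.Pair n w"
proof
  show "Defs.Pair n (p \<circ> w \<circ> inv p) \<subseteq> (`) p ` Defs.Pair n w"
  proof
    fix X assume "X \<in> Defs.Pair n (p \<circ> w \<circ> inv p)"
    then obtain k where k: "X = {k, p (w (inv p k))}" "k \<in> {1..n}" "p (w (inv p k)) \<noteq> k"
      unfolding Pair_def by auto
    define i where "i = inv p k"
    have pi: "p i = k" using permutes_inverses(1)[OF hp] i_def by simp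
    have i1: "i \<in> {1..n}" using permutes_in_image[OF permutes_inv[OF hp]] k(2) i_def by blast
    have "w i \<noteq> i" using k(3) pi i_def by auto
    then have "{i, w i} \<in> Defs.Pair n w" using i1 unfolding Pair_def by blast
    moreover have "X = p ` {i, w i}" using k(1) pi i_def by auto
    ultimately show "X \<in> (`) p ` Defs.Pair n w" by blast
  qed
next
  show "(`) p ` Defs.Pair n w \<subseteq> Defs.Pair n (p \<circ> w \<circ> inv p)"
  proof
    fix X assume "X \<in> (`) p ` Defs.Pair n w"
    then obtain i where i: "X = p ` {i, w i}" "i \<in> {1..n}" "w i \<noteq> i"
      unfolding Pair_def by auto
    have ip: "inv p (p i) = i" using permutes_inverses(2)[OF hp] .
    have "p (w i) \<noteq> p i" using i(3) permutes_inj[OF hp] by (auto dest: injD)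
    moreover have "p i \<in> {1..n}" using permutes_in_image[OF hp] i(2) by blast
    ultimately show "X \<in> Defs.Pair n (p \<circ> w \<circ> inv p)"
      unfolding Pair_def using i(1) ip by (auto intro!: exI[of _ "p i"])
  qed
qed

lemma pt_gen:
  assumes hs: "\<sigma> permutes {1..n}" and hp: "\<pi> permutes {1..n}"
    and i: "i \<in> {1..n}" and j: "j \<in> {1..n}" and ij: "i \<noteq> j"
  shows "(if {i,j} \<in> Inv n (\<sigma>\<circ>\<pi>) then -1 else 1::'a::comm_ring_1)
       = (if {i,j} \<in> Inv n \<pi> then -1 else 1) * (if {\<pi> i, \<pi> j} \<in> Inv n \<sigma> then -1 else 1)"
proof -
    have pij: "\<pi> i \<noteq> \<pi> j" using ij permutes_inj[OF hp] by (auto dest: injD)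
    have spij: "\<sigma> (\<pi> i) \<noteq> \<sigma> (\<pi> j)" using pij permutes_inj[OF hs] by (auto dest: injD)
    have pi1: "\<pi> i \<in> {1..n}" "\<pi> j \<in> {1..n}" using permutes_in_image[OF hp] i j by auto
    note m3 = Inv_mem[OF pi1(1) pi1(2), of \<sigma>]
    note m1 = Inv_mem[OF i j, of \<pi>]
    note m2 = Inv_mem[OF i j, of "\<sigma>\<circ>\<pi>"]
    show ?thesis unfolding m1 m2 m3 o_apply
      by (rule sign3) (use ij pij spij in auto)
qed

lemma part1:
  assumes hs: "\<sigma> permutes {1..n}" and hp: "\<pi> permutes {1..n}" and hw: "w \<in> Invol n"
  shows "(-1::'a::comm_ring_1)^inv_w n w (\<sigma>\<circ>\<pi>) = (-1)^inv_w n w \<pi> * (-1)^inv_w n (\<pi>\<circ>w\<circ>inv \<pi>) \<sigma>"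
proof -
  define F where "F p P = (if P \<in> Inv n p then -1 else (1::'a))" for p P
  have ww: "w permutes {1..n}" using hw unfolding Invol_def by auto
  have pt: "F (\<sigma>\<circ>\<pi>) P = F \<pi> P * F \<sigma> (\<pi> ` P)" if hP: "P \<in> Defs.Pair n w" for P
  proof -
    obtain i where i: "P = {i, w i}" "i \<in> {1..n}" "w i \<noteq> i"
      using hP unfolding Pair_eq by blast
    define j where "j = w i"
    have j: "j \<in> {1..n}" using permutes_in_image[OF ww] i(2) j_def by blast
    have ij: "i \<noteq> j" using i(3) j_def by auto
    have j: "w i \<in> {1..n}" using permutes_in_image[OF ww] i(2) by blast
    show ?thesis unfolding F_def i(1) image_insert image_empty
      by (rule pt_gen[OF hs hp i(2) j]) (use i(3) in auto)
  qed
  have inj: "inj_on ((`) \<pi>) (Defs.Pair n w)"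
    using permutes_inj[OF hp] by (auto simp: inj_on_def inj_image_eq_iff)
  have "(-1::'a)^inv_w n w (\<sigma>\<circ>\<pi>) = (\<Prod>P\<in>Defs.Pair n w. F (\<sigma>\<circ>\<pi>) P)"
    unfolding inv_w_prod F_def ..
  also have "\<dots> = (\<Prod>P\<in>Defs.Pair n w. F \<pi> P) * (\<Prod>P\<in>Defs.Pair n w. F \<sigma> (\<pi> ` P))"
    using pt by (simp add: prod.distrib)
  also have "(\<Prod>P\<in>Defs.Pair n w. F \<sigma> (\<pi> ` P)) = (\<Prod>Q\<in>(`) \<pi> ` Defs.Pair n w. F \<sigma> Q)"
    using prod.reindex[OF inj, of "F \<sigma>"] by simp
  also have "\<dots> = (-1)^inv_w n (\<pi>\<circ>w\<circ>inv \<pi>) \<sigma>"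
    unfolding inv_w_prod F_def Pair_conj[OF hp] ..
  also have "(\<Prod>P\<in>Defs.Pair n w. F \<pi> P) = (-1)^inv_w n w \<pi>"
    unfolding inv_w_prod F_def ..
  finally show ?thesis .
qed


lemma conj_invol:
  assumes hp: "p permutes {1..n}" and hw: "w \<in> Invol n"
  shows "p \<circ> w \<circ> inv p \<in> Invol n"
proof -
  have ww: "w permutes {1..n}" "w \<circ> w = id" using hw unfolding Invol_def by auto
  have "p \<circ> w \<circ> inv p permutes {1..n}"
    by (intro permutes_compose permutes_inv hp ww(1))
  moreover have "(p \<circ> w \<circ> inv p) \<circ> (p \<circ> w \<circ> inv p) = id"
  proof -
    have "(p \<circ> w \<circ> inv p) \<circ> (p \<circ> w \<circ> inv p) = p \<circ> w \<circ> (inv p \<circ> p) \<circ> w \<circ> inv p"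
      by (simp add: o_assoc)
    also have "\<dots> = p \<circ> (w \<circ> w) \<circ> inv p" by (simp add: permutes_inv_o[OF hp] o_assoc)
    also have "\<dots> = id" by (simp add: ww(2) permutes_inv_o[OF hp])
    finally show ?thesis .
  qed
  ultimately show ?thesis unfolding Invol_def by blast
qed

lemma conj_invol':
  assumes hp: "p permutes {1..n}" and hw: "w \<in> Invol n"
  shows "inv p \<circ> w \<circ> p \<in> Invol n"
  using conj_invol[OF permutes_inv[OF hp] hw] inv_inv_eq[OF permutes_bij[OF hp]] by simp

lemma Inv_id: "Inv n id = {}"
  unfolding Inv_def by (auto simp: mult_less_0_iff)

lemma conj_eq:
  assumes hp: "p permutes {1..n}"
  shows "(inv p \<circ> u \<circ> p = w) = (u = p \<circ> w \<circ> inv p)"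
proof
  assume "inv p \<circ> u \<circ> p = w"
  then have "p \<circ> (inv p \<circ> u \<circ> p) \<circ> inv p = p \<circ> w \<circ> inv p" by simp
  then have "(p \<circ> inv p) \<circ> u \<circ> (p \<circ> inv p) = p \<circ> w \<circ> inv p" by (simp add: comp_assoc)
  then show "u = p \<circ> w \<circ> inv p" by (simp add: permutes_inv_o[OF hp])
next
  assume "u = p \<circ> w \<circ> inv p"
  then have "inv p \<circ> u \<circ> p = (inv p \<circ> p) \<circ> w \<circ> (inv p \<circ> p)" by (simp add: comp_assoc)
  then show "inv p \<circ> u \<circ> p = w" by (simp add: permutes_inv_o[OF hp])
qed

lemma part2:
  assumes hp: "p permutes {1..n}" and hw: "w \<in> Invol n"
  shows "rho n p (C w) = (\<lambda>u. (-1) ^ inv_w n w p * C (p \<circ> w \<circ> inv p) u)"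
proof
  fix u
  show "rho n p (C w) u = (-1) ^ inv_w n w p * C (p \<circ> w \<circ> inv p) u"
  proof (cases "u \<in> Invol n")
    case True
    then show ?thesis unfolding rho_def C_def using conj_eq[OF hp, of u w] by auto
  next
    case False
    then have "u \<noteq> p \<circ> w \<circ> inv p" using conj_invol[OF hp hw] by auto
    then show ?thesis using False unfolding rho_def C_def by auto
  qed
qed

lemma part5:
  assumes hs: "\<sigma> permutes {1..n}" and hp: "\<pi> permutes {1..n}"
  shows "rho n (\<sigma> \<circ> \<pi>) v = rho n \<sigma> (rho n \<pi> v)"
proof
  fix u
  show "rho n (\<sigma> \<circ> \<pi>) v u = rho n \<sigma> (rho n \<pi> v) u"
  proof (cases "u \<in> Invol n")
    case False then show ?thesis unfolding rho_def by simp
  next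
    case True
    define w' where "w' = inv \<sigma> \<circ> u \<circ> \<sigma>"
    define w where "w = inv \<pi> \<circ> w' \<circ> \<pi>"
    have w'I: "w' \<in> Invol n" unfolding w'_def by (rule conj_invol'[OF hs True])
    have wI: "w \<in> Invol n" unfolding w_def by (rule conj_invol'[OF hp w'I])
    have e1: "inv (\<sigma> \<circ> \<pi>) \<circ> u \<circ> (\<sigma> \<circ> \<pi>) = w"
      unfolding w_def w'_def o_inv_distrib[OF permutes_bij[OF hs] permutes_bij[OF hp]]
      by (simp add: o_assoc)
    have e2: "\<pi> \<circ> w \<circ> inv \<pi> = w'" using conj_eq[OF hp, of w' w] w_def by simp
    have p1: "(-1::rat)^inv_w n w (\<sigma>\<circ>\<pi>) = (-1)^inv_w n w \<pi> * (-1)^inv_w n w' \<sigma>"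
      using part1[OF hs hp wI] e2 by simp
    show ?thesis
      unfolding rho_def using True w'I
      by (simp add: e1 p1 w'_def[symmetric] w_def[symmetric])
  qed
qed

lemma part4: "v \<in> V n \<Longrightarrow> rho n id v = v"
  unfolding rho_def V_def inv_w_def by (auto simp: Inv_id fun_eq_iff)

lemma part3: "rho n p v \<in> V n"
  unfolding rho_def V_def by auto

lemma Inv_s:
  assumes "i \<in> {1..<n}"
  shows "Inv n (s i) = {{i, i+1}}"
proof
  show "Inv n (s i) \<subseteq> {{i, i+1}}"
  proof
    fix X assume "X \<in> Inv n (s i)"
    then obtain a b where ab: "X = {a,b}" "(int b - int a) * (int (s i b) - int (s i a)) < 0"
      unfolding Inv_def by blast
    then have "(a = i \<and> b = i+1) \<or> (a = i+1 \<and> b = i)"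
      unfolding s_def transpose_def by (auto simp: mult_less_0_iff split: if_splits)
    then show "X \<in> {{i, i+1}}" using ab(1) by auto
  qed
next
  have "(int (i+1) - int i) * (int (s i (i+1)) - int (s i i)) < 0"
    unfolding s_def by simp
  moreover have "i \<in> {1..n}" "i+1 \<in> {1..n}" using assms by auto
  ultimately have "{i, i+1} \<in> Inv n (s i)" unfolding Inv_def by blast
  then show "{{i, i+1}} \<subseteq> Inv n (s i)" by simp
qed

lemma part6:
  assumes hi: "i \<in> {1..<n}" and hw: "w \<in> Invol n"
  shows "rho n (s i) (C w) = (\<lambda>u. sgn_s i w * C (s i \<circ> w \<circ> s i) u)"
proof -
  have ww: "w permutes {1..n}" "w \<circ> w = id" using hw unfolding Invol_def by auto
  have ww2: "w (w x) = x" for x using ww(2) by (metis comp_apply id_apply)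
  have sp: "s i permutes {1..n}" unfolding s_def using hi by (intro permutes_swap_id) auto
  have si: "inv (s i) = s i" unfolding s_def by simp
  have pair_iff: "({i, i+1} \<in> Defs.Pair n w) = (w i = i+1)"
  proof
    assume "{i, i+1} \<in> Defs.Pair n w"
    then obtain j where j: "{i, i+1} = {j, w j}" "w j \<noteq> j" unfolding Pair_def by auto
    then have "(j = i \<and> w j = i+1) \<or> (j = i+1 \<and> w j = i)" by (auto simp: doubleton_eq_iff)
    then show "w i = i+1" using ww2 by metis
  next
    assume "w i = i+1"
    then show "{i, i+1} \<in> Defs.Pair n w" using hi unfolding Pair_def by force
  qed
  have card: "inv_w n w (s i) = (if w i = i+1 then 1 else 0)"
    unfolding inv_w_def Inv_s[OF hi] using pair_iff by auto
  have sg: "sgn_s i w = (if w i = i+1 then -1 else 1)"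
  proof (cases "w i = i+1")
    case True
    have wi1: "w (i+1) = i" using True ww2 by metis
    have "s i \<circ> w \<circ> s i = w"
    proof
      fix x
      show "(s i \<circ> w \<circ> s i) x = w x"
      proof (cases "x = i \<or> x = i+1")
        case True then show ?thesis using \<open>w i = i+1\<close> wi1 unfolding s_def by auto
      next
        case False
        have "w x \<noteq> i" using False wi1 ww2 by metis
        moreover have "w x \<noteq> i+1" using False True ww2 by metis
        ultimately show ?thesis using False unfolding s_def by auto
      qed
    qed
    then show ?thesis using True wi1 unfolding sgn_s_def by auto
  next
    case False
    have "\<not> (s i \<circ> w \<circ> s i = w \<and> w i > w (i + 1))"
    proof
      assume h: "s i \<circ> w \<circ> s i = w \<and> w i > w (i + 1)"
      then have e: "s i (w (i+1)) = w i" by (metis comp_apply s_def transpose_apply_first)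
      show False
      proof (cases "w (i+1) = i")
        case True then show False using ww2 \<open>w i \<noteq> i+1\<close> by metis
      next
        case c2: False
        show False
        proof (cases "w (i+1) = i+1")
          case True then show False using e h unfolding s_def by auto
        next
          case False then show False using e h c2 unfolding s_def by auto
        qed
      qed
    qed
    then show ?thesis using False unfolding sgn_s_def by auto
  qed
  show ?thesis
    unfolding part2[OF sp hw] si card sg by (auto simp: fun_eq_iff)
qed

theorem mainTheorem2:
  fixes n :: nat
  shows "(\<forall>\<sigma>\<in>Sym n. \<forall>\<pi>\<in>Sym n. \<forall>w\<in>Invol n.
            (-1::int) ^ inv_w n w (\<sigma> \<circ> \<pi>)
              = (-1) ^ inv_w n w \<pi> * (-1) ^ inv_w n (\<pi> \<circ> w \<circ> inv \<pi>) \<sigma>)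
       \<and> (\<forall>\<pi>\<in>Sym n. \<forall>w\<in>Invol n.
            rho n \<pi> (C w) = (\<lambda>u. (-1) ^ inv_w n w \<pi> * C (\<pi> \<circ> w \<circ> inv \<pi>) u))
       \<and> (\<forall>\<pi>\<in>Sym n. \<forall>v\<in>V n. rho n \<pi> v \<in> V n)
       \<and> (\<forall>v\<in>V n. rho n id v = v)
       \<and> (\<forall>\<sigma>\<in>Sym n. \<forall>\<pi>\<in>Sym n. \<forall>v\<in>V n. rho n (\<sigma> \<circ> \<pi>) v = rho n \<sigma> (rho n \<pi> v))
       \<and> (\<forall>i\<in>{1..<n}. \<forall>w\<in>Invol n.
            rho n (s i) (C w) = (\<lambda>u. sgn_s i w * C (s i \<circ> w \<circ> s i) u))"
  unfolding Sym_def using part1 part2 part3 part4 part5 part6 by auto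

end
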